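(* Let $c$ be a cost function, $\alpha_i>0$, $m_i$ measures on $\mathbb{R}^n$, and let $(\Phi_1,\dots,\Phi_N)$ be an admissible tuple maximizing $\mathcal{BS}_{\alpha,m}$ over all admissible tuples, with $0<\int e^{-\alpha_i\Phi_i}dm_i<\infty$. Let $\mu_i=e^{-\alpha_i\Phi_i}m_i/\int e^{-\alpha_i\Phi_i}dm_i$ and $d(x)=\sum_{i=1}^N\Phi_i(x_i)-c(x)\ge0$. Let $\nu_1,\dots,\nu_N$ be probability measures on $\mathbb{R}^n$ such that the minimization transportation problem for the cost $d$ with marginals $\nu_i$ and its dual problem both admit solutions and their optimal values coincide. Then $$K^{\min}_d(\nu_1,\dots,\nu_N)\le\sum_{i=1}^N\frac{1}{\alpha_i}\,\mathrm{Ent}_{\mu_i}(\nu_i).$$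
   Context: Points of $(\mathbb{R}^n)^N$ are written $x=(x_1,\dots,x_N)$. A tuple $(V_i)$ of functions $V_i:\mathbb{R}^n\to(-\infty,+\infty]$ is admissible (for $c$) if $\sum_iV_i(x_i)\ge c(x)$ for all $x$; $\mathcal{BS}_{\alpha,m}(V_1,\dots,V_N)=\prod_i(\int e^{-\alpha_iV_i}dm_i)^{1/\alpha_i}$. $K^{\min}_d(\nu_1,\dots,\nu_N)=\inf_\pi\int d\,d\pi$ over probability measures $\pi$ on $(\mathbb{R}^n)^N$ with marginals $\nu_1,\dots,\nu_N$; its dual problem is to maximize $\sum_i\int f_i\,d\nu_i$ over tuples $f_i\in L^1(\nu_i)$ with $\sum_if_i(x_i)\le d(x)$ for all $x$. $\mathrm{Ent}_\mu(\nu)=\int\rho\log\rho\,d\mu$ if $\nu=\rho\mu$, and $+\infty$ if $\nu$ is not absolutely continuous w.r.t. $\mu$. *)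

theory Defs
  imports "HOL-Probability.Probability"
begin

text \<open>Points of (R^n)^N are functions x :: 'i \<Rightarrow> 'a, where 'i is a finite index type
  with N = CARD('i) elements and 'a is an abstract Euclidean space R^n.
  Potentials V_i take values in (-\<infinity>,+\<infinity>] (ereal, never -\<infinity>).\<close>

definition expneg :: "real \<Rightarrow> ereal \<Rightarrow> ennreal" where
  "expneg \<alpha> v = (case v of ereal r \<Rightarrow> ennreal (exp (- \<alpha> * r)) | PInfty \<Rightarrow> 0 | MInfty \<Rightarrow> \<infinity>)"

definition admissible :: "(('i::finite \<Rightarrow> 'a) \<Rightarrow> real) \<Rightarrow> ('i \<Rightarrow> 'a \<Rightarrow> ereal) \<Rightarrow> bool" where
  "admissible c V \<longleftrightarrow> (\<forall>i y. V i y \<noteq> -\<infinity>) \<and> (\<forall>x. (\<Sum>i\<in>UNIV. V i (x i)) \<ge> ereal (c x))"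

definition ennpow :: "ennreal \<Rightarrow> real \<Rightarrow> ennreal" where
  "ennpow I p = (if I = \<infinity> then \<infinity> else ennreal (enn2real I powr p))"

definition BS :: "('i::finite \<Rightarrow> real) \<Rightarrow> ('i \<Rightarrow> 'a measure) \<Rightarrow> ('i \<Rightarrow> 'a \<Rightarrow> ereal) \<Rightarrow> ennreal" where
  "BS \<alpha> m V = (\<Prod>i\<in>UNIV. ennpow (\<integral>\<^sup>+ y. expneg (\<alpha> i) (V i y) \<partial>(m i)) (1 / \<alpha> i))"

definition couplings :: "('i::finite \<Rightarrow> 'a::euclidean_space measure) \<Rightarrow> ('i \<Rightarrow> 'a) measure set" where
  "couplings \<nu> = {\<pi>. prob_space \<pi> \<and> sets \<pi> = sets (PiM UNIV (\<lambda>_. borel)) \<and>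
                    (\<forall>i. distr \<pi> borel (\<lambda>x. x i) = \<nu> i)}"

definition Kmin :: "(('i::finite \<Rightarrow> 'a::euclidean_space) \<Rightarrow> ereal) \<Rightarrow> ('i \<Rightarrow> 'a measure) \<Rightarrow> ennreal" where
  "Kmin d \<nu> = (INF \<pi>\<in>couplings \<nu>. \<integral>\<^sup>+ x. e2ennreal (d x) \<partial>\<pi>)"

definition dual_feasible :: "(('i::finite \<Rightarrow> 'a::euclidean_space) \<Rightarrow> ereal) \<Rightarrow> ('i \<Rightarrow> 'a measure) \<Rightarrow> ('i \<Rightarrow> 'a \<Rightarrow> real) \<Rightarrow> bool" where
  "dual_feasible d \<nu> f \<longleftrightarrow> (\<forall>i. integrable (\<nu> i) (f i)) \<and>
     (\<forall>x. ereal (\<Sum>i\<in>UNIV. f i (x i)) \<le> d x)"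

definition dual_value :: "('i::finite \<Rightarrow> 'a measure) \<Rightarrow> ('i \<Rightarrow> 'a \<Rightarrow> real) \<Rightarrow> real" where
  "dual_value \<nu> f = (\<Sum>i\<in>UNIV. \<integral>y. f i y \<partial>(\<nu> i))"

definition xlogx :: "real \<Rightarrow> real" where
  "xlogx t = (if t \<le> 0 then 0 else t * ln t)"

text \<open>Relative entropy Ent_\<mu>(\<nu>) = \<integral> \<rho> log \<rho> d\<mu> if \<nu> = \<rho>\<mu>, +\<infinity> otherwise
  (the integral taken in the extended sense: positive part minus negative part).\<close>
definition Ent :: "'a measure \<Rightarrow> 'a measure \<Rightarrow> ereal" where
  "Ent \<mu> \<nu> =
    (if absolutely_continuous \<mu> \<nu> \<and> sets \<nu> = sets \<mu> then
       (let \<rho> = (\<lambda>x. enn2real (RN_deriv \<mu> \<nu> x)) in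
         enn2ereal (\<integral>\<^sup>+ x. ennreal (xlogx (\<rho> x)) \<partial>\<mu>)
         - enn2ereal (\<integral>\<^sup>+ x. ennreal (- xlogx (\<rho> x)) \<partial>\<mu>))
     else \<infinity>)"

end

theory Submission
  imports Defs
begin

lemma expneg_alt: "expneg a v = (if v = \<infinity> then 0 else if v = -\<infinity> then \<infinity> else ennreal (exp (- a * real_of_ereal v)))"
  by (cases v) (auto simp: expneg_def)
lemma expneg_meas[measurable]: "expneg a \<in> borel_measurable borel"
  unfolding expneg_alt[abs_def] by measurable
lemma xlogx_meas[measurable]: "xlogx \<in> borel_measurable borel"
  unfolding xlogx_def[abs_def] by measurable

lemma xlogx_ge: "xlogx t \<ge> t - 1"
proof (cases "t \<le> 0")
  case True then show ?thesis by (simp add: xlogx_def)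
next
  case False
  then have "ln (1/t) \<le> 1/t - 1" by (intro ln_le_minus_one) auto
  then have "- ln t \<le> 1/t - 1" using False by (simp add: ln_div)
  then have "t * (- ln t) \<le> t * (1/t - 1)" using False by (intro mult_left_mono) auto
  then show ?thesis using False by (simp add: xlogx_def algebra_simps)
qed

lemma young: assumes "0 \<le> t" shows "t * b \<le> xlogx t - t + exp b"
proof (cases "t = 0")
  case True then show ?thesis by (simp add: xlogx_def)
next
  case False
  then have t: "t > 0" using assms by auto
  have "1 + (b - ln t) \<le> exp (b - ln t)" by (rule exp_ge_add_one_self)
  also have "\<dots> = exp b / t" using t by (simp add: exp_diff)
  finally have "t * (1 + (b - ln t)) \<le> t * (exp b / t)" using t by (intro mult_left_mono) auto
  then show ?thesis using t by (simp add: xlogx_def algebra_simps)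
qed

lemma expneg_ereal[simp]: "expneg a (ereal r) = ennreal (exp (- a * r))"
  by (simp add: expneg_def)
lemma expneg_inf[simp]: "expneg a \<infinity> = 0"
  by (simp add: expneg_def)

lemma expneg_diff: assumes "v \<noteq> -\<infinity>"
  shows "expneg a (v - ereal t) = expneg a v * ennreal (exp (a * t))"
proof (cases v)
  case (real r)
  then show ?thesis by (simp add: ennreal_mult[symmetric] exp_add[symmetric] algebra_simps)
qed (use assms in auto)

lemma expneg_fin: assumes "v \<noteq> -\<infinity>" shows "expneg a v < \<infinity>"
  using assms by (cases v) auto

lemma ereal_sum_diff:
  assumes "finite A" "\<And>i. i \<in> A \<Longrightarrow> a i \<noteq> -\<infinity>"
  shows "(\<Sum>i\<in>A. a i - ereal (b i)) = (\<Sum>i\<in>A. a i) - ereal (\<Sum>i\<in>A. b i) \<and> (\<Sum>i\<in>A. a i) \<noteq> -\<infinity>"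
  using assms
proof (induction A rule: finite_induct)
  case empty then show ?case by (simp add: zero_ereal_def)
next
  case (insert x F)
  then have ax: "a x \<noteq> -\<infinity>" and IH: "(\<Sum>i\<in>F. a i - ereal (b i)) = (\<Sum>i\<in>F. a i) - ereal (\<Sum>i\<in>F. b i)"
     "(\<Sum>i\<in>F. a i) \<noteq> -\<infinity>" by auto
  show ?case using insert(1,2) ax IH
    by (cases "a x"; cases "\<Sum>i\<in>F. a i") (auto simp: algebra_simps)
qed

lemma prod_top_ennreal:
  fixes a :: "'i \<Rightarrow> ennreal"
  assumes "finite I" "j \<in> I" "a j = \<infinity>" "\<And>i. i \<in> I \<Longrightarrow> a i > 0"
  shows "prod a I = \<infinity>"
proof -
  have "prod a I = a j * prod a (I - {j})" using assms by (simp add: prod.remove)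
  moreover have "prod a (I - {j}) \<noteq> 0"
  proof -
    have "\<forall>i\<in>I - {j}. a i \<noteq> 0" using assms(4) by fastforce
    then show ?thesis using assms(1) by (simp add: prod_zero_iff)
  qed
  ultimately show ?thesis using assms by (simp add: ennreal_top_mult)
qed

lemma ennreal_plus1_le: "ennreal (a + 1) \<le> ennreal a + 1"
proof (cases "0 \<le> a")
  case True then show ?thesis by (simp add: ennreal_plus)
next
  case False
  then have "ennreal (a + 1) \<le> 1" by (simp add: ennreal_le_1)
  also have "(1::ennreal) \<le> ennreal a + 1" by simp
  finally show ?thesis .
qed

lemma enn2ereal_real: "x \<noteq> \<top> \<Longrightarrow> enn2ereal x = ereal (enn2real x)"
  by (cases x rule: ennreal_cases) auto

lemma gibbs:
  fixes \<mu> \<nu> :: "'a measure" and g :: "'a \<Rightarrow> real"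
  assumes pmu: "prob_space \<mu>" and pnu: "prob_space \<nu>" and sets_eq: "sets \<nu> = sets \<mu>"
    and g[measurable]: "g \<in> borel_measurable \<mu>" and gi: "integrable \<nu> g"
    and W: "(\<integral>\<^sup>+x. ennreal (exp (g x)) \<partial>\<mu>) = ennreal W" and Wpos: "0 < W"
  shows "ereal (integral\<^sup>L \<nu> g) \<le> Ent \<mu> \<nu> + ereal (ln W)"
proof (cases "absolutely_continuous \<mu> \<nu>")
  case False then show ?thesis by (simp add: Ent_def)
next
  case ac: True
  interpret \<mu>: prob_space \<mu> by fact
  interpret \<nu>: prob_space \<nu> by fact
  define \<rho> where "\<rho> = (\<lambda>x. enn2real (RN_deriv \<mu> \<nu> x))"
  have \<rho>m[measurable]: "\<rho> \<in> borel_measurable \<mu>" unfolding \<rho>_def by measurable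
  have fin: "AE x in \<mu>. RN_deriv \<mu> \<nu> x \<noteq> \<infinity>"
    by (rule \<mu>.RN_deriv_finite[OF _ ac sets_eq]) unfold_locales
  have "density \<mu> (\<lambda>x. ennreal (\<rho> x)) = density \<mu> (RN_deriv \<mu> \<nu>)"
    by (rule density_cong) (use fin in \<open>auto simp: \<rho>_def less_top\<close>)
  also have "\<dots> = \<nu>" by (rule \<mu>.density_RN_deriv[OF ac sets_eq])
  finally have dens: "density \<mu> (\<lambda>x. ennreal (\<rho> x)) = \<nu>" .
  have \<rho>nn: "\<And>x. 0 \<le> \<rho> x" by (simp add: \<rho>_def)
  have "(\<integral>\<^sup>+x. 1 \<partial>\<nu>) = (\<integral>\<^sup>+x. ennreal (\<rho> x) * 1 \<partial>\<mu>)"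
    by (subst dens[symmetric], subst nn_integral_density) auto
  then have int1: "(\<integral>\<^sup>+x. ennreal (\<rho> x) \<partial>\<mu>) = 1" by (simp add: \<nu>.emeasure_space_1)
  have \<rho>int: "integrable \<mu> \<rho>" by (rule integrableI_nonneg) (auto simp: int1 \<rho>nn)
  have \<rho>I: "integral\<^sup>L \<mu> \<rho> = 1" by (subst integral_eq_nn_integral) (auto simp: int1 \<rho>nn)
  define g' where "g' x = g x - ln W" for x
  have g'm[measurable]: "g' \<in> borel_measurable \<mu>" unfolding g'_def by measurable
  have "(\<integral>\<^sup>+x. ennreal (exp (g' x)) \<partial>\<mu>) = (\<integral>\<^sup>+x. ennreal (exp (g x)) * ennreal (1 / W) \<partial>\<mu>)"
    using Wpos by (intro nn_integral_cong) (simp add: g'_def exp_diff ennreal_mult[symmetric])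
  also have "\<dots> = (\<integral>\<^sup>+x. ennreal (exp (g x)) \<partial>\<mu>) * ennreal (1 / W)"
    by (rule nn_integral_multc) measurable
  also have "\<dots> = 1" using Wpos unfolding W by (simp add: ennreal_mult[symmetric])
  finally have e1: "(\<integral>\<^sup>+x. ennreal (exp (g' x)) \<partial>\<mu>) = 1" .
  have eint: "integrable \<mu> (\<lambda>x. exp (g' x))" by (rule integrableI_nonneg) (auto simp: e1)
  have eI: "integral\<^sup>L \<mu> (\<lambda>x. exp (g' x)) = 1" by (subst integral_eq_nn_integral) (auto simp: e1)
  have gm\<nu>: "g \<in> borel_measurable \<nu>" by (subst measurable_cong_sets[OF sets_eq refl]) (rule g)
  have \<rho>g: "integrable \<mu> (\<lambda>x. \<rho> x * g x)"
    using gi unfolding dens[symmetric] integrable_density[OF g \<rho>m AE_I2[OF \<rho>nn]] by simp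
  have \<rho>gI: "integral\<^sup>L \<nu> g = integral\<^sup>L \<mu> (\<lambda>x. \<rho> x * g x)"
    unfolding dens[symmetric] integral_density[OF g \<rho>m AE_I2[OF \<rho>nn]] by simp
  have \<rho>g': "integrable \<mu> (\<lambda>x. \<rho> x * g' x)"
    unfolding g'_def right_diff_distrib using \<rho>g \<rho>int by auto
  have \<rho>g'I: "integral\<^sup>L \<mu> (\<lambda>x. \<rho> x * g' x) = integral\<^sup>L \<nu> g - ln W"
    unfolding g'_def right_diff_distrib using \<rho>g \<rho>int \<rho>I \<rho>gI by simp
  have N: "(\<integral>\<^sup>+x. ennreal (- xlogx (\<rho> x)) \<partial>\<mu>) \<le> 1"
  proof -
    have "(\<integral>\<^sup>+x. ennreal (- xlogx (\<rho> x)) \<partial>\<mu>) \<le> (\<integral>\<^sup>+x. 1 \<partial>\<mu>)"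
      using xlogx_ge \<rho>nn by (intro nn_integral_mono) (smt (verit) ennreal_le_1)
    then show ?thesis by (simp add: \<mu>.emeasure_space_1)
  qed
  show ?thesis
  proof (cases "(\<integral>\<^sup>+x. ennreal (xlogx (\<rho> x)) \<partial>\<mu>) = \<infinity>")
    case True
    have "Ent \<mu> \<nu> = \<infinity>"
      using ac sets_eq True N unfolding Ent_def Let_def \<rho>_def[symmetric]
      by (cases "enn2ereal (\<integral>\<^sup>+x. ennreal (- xlogx (\<rho> x)) \<partial>\<mu>)") auto
    then show ?thesis by simp
  next
    case False
    have xm[measurable]: "(\<lambda>x. xlogx (\<rho> x)) \<in> borel_measurable \<mu>" by measurable
    have "(\<integral>\<^sup>+x. ennreal (xlogx (\<rho> x) + 1) \<partial>\<mu>) \<le> (\<integral>\<^sup>+x. ennreal (xlogx (\<rho> x)) + 1 \<partial>\<mu>)"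
      by (intro nn_integral_mono ennreal_plus1_le)
    also have "\<dots> = (\<integral>\<^sup>+x. ennreal (xlogx (\<rho> x)) \<partial>\<mu>) + 1"
      by (subst nn_integral_add) (auto simp: \<mu>.emeasure_space_1)
    also have "\<dots> < \<infinity>" using False by (simp add: less_top)
    finally have fin1: "(\<integral>\<^sup>+x. ennreal (xlogx (\<rho> x) + 1) \<partial>\<mu>) < \<infinity>" .
    have "\<And>x. 0 \<le> xlogx (\<rho> x) + 1"
      using xlogx_ge \<rho>nn by (smt (verit))
    then have xi1: "integrable \<mu> (\<lambda>x. xlogx (\<rho> x) + 1)"
      using fin1 by (intro integrableI_nonneg) auto
    have "integrable \<mu> (\<lambda>x. (xlogx (\<rho> x) + 1) - 1)" by (rule Bochner_Integration.integrable_diff[OF xi1 \<mu>.integrable_const])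
    then have xint: "integrable \<mu> (\<lambda>x. xlogx (\<rho> x))" by simp
    have Ent_eq: "Ent \<mu> \<nu> = ereal (integral\<^sup>L \<mu> (\<lambda>x. xlogx (\<rho> x)))"
    proof -
      have f2: "(\<integral>\<^sup>+x. ennreal (- xlogx (\<rho> x)) \<partial>\<mu>) \<noteq> \<infinity>" using N by (auto simp: top_unique)
      show ?thesis
        using ac sets_eq False f2 unfolding Ent_def Let_def \<rho>_def[symmetric] real_lebesgue_integral_def[OF xint]
        by (simp add: enn2ereal_real)
    qed
    have "integral\<^sup>L \<mu> (\<lambda>x. \<rho> x * g' x) \<le> integral\<^sup>L \<mu> (\<lambda>x. xlogx (\<rho> x) - \<rho> x + exp (g' x))"
      using \<rho>g' xint \<rho>int eint by (intro integral_mono young) (auto simp: \<rho>nn)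
    also have "\<dots> = integral\<^sup>L \<mu> (\<lambda>x. xlogx (\<rho> x))"
      using xint \<rho>int eint \<rho>I eI by simp
    finally show ?thesis using \<rho>g'I Ent_eq by simp
  qed
qed

lemma per_i:
  fixes m \<nu> :: "'a::topological_space measure" and \<Phi> :: "'a \<Rightarrow> ereal" and f :: "'a \<Rightarrow> real"
  assumes apos: "\<alpha> > 0" and msets: "sets m = sets borel" and \<Phi>m: "\<Phi> \<in> borel_measurable borel"
    and \<Phi>ninf: "\<And>y. \<Phi> y \<noteq> -\<infinity>"
    and Z: "(\<integral>\<^sup>+y. expneg \<alpha> (\<Phi> y) \<partial>m) = ennreal Zr" and Zpos: "0 < Zr"
    and pnu: "prob_space \<nu>" and nsets: "sets \<nu> = sets borel" and fi: "integrable \<nu> f"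
    and W: "(\<integral>\<^sup>+y. expneg \<alpha> (\<Phi> y - ereal (f y)) \<partial>m) = ennreal Wr" and Wpos: "0 < Wr"
  shows "ereal (integral\<^sup>L \<nu> f) \<le> ereal (1/\<alpha>) * Ent (density m (\<lambda>y. expneg \<alpha> (\<Phi> y) / (\<integral>\<^sup>+z. expneg \<alpha> (\<Phi> z) \<partial>m))) \<nu> + ereal ((1/\<alpha>) * ln (Wr/Zr))"
proof -
  define \<mu> where "\<mu> = density m (\<lambda>y. expneg \<alpha> (\<Phi> y) / ennreal Zr)"
  have \<Phi>m'[measurable]: "\<Phi> \<in> borel_measurable m" by (subst measurable_cong_sets[OF msets refl]) (rule \<Phi>m)
  have fm\<nu>: "f \<in> borel_measurable \<nu>" using fi by auto
  have fm[measurable]: "f \<in> borel_measurable m"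
    using fm\<nu> unfolding measurable_cong_sets[OF nsets refl] measurable_cong_sets[OF msets refl] .
  have smu: "sets \<mu> = sets m" by (simp add: \<mu>_def)
  have "(\<integral>\<^sup>+y. 1 \<partial>\<mu>) = (\<integral>\<^sup>+y. expneg \<alpha> (\<Phi> y) / ennreal Zr * 1 \<partial>m)"
    unfolding \<mu>_def by (subst nn_integral_density) auto
  also have "\<dots> = (\<integral>\<^sup>+y. expneg \<alpha> (\<Phi> y) \<partial>m) / ennreal Zr"
    by (simp add: nn_integral_divide)
  also have "\<dots> = 1" using Zpos unfolding Z by (simp add: divide_ennreal)
  finally have pmu: "prob_space \<mu>" by (intro prob_spaceI) simp
  define g where "g y = \<alpha> * f y" for y
  have gm: "g \<in> borel_measurable \<mu>" unfolding g_def by (subst measurable_cong_sets[OF smu refl]) measurable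
  have gi: "integrable \<nu> g" unfolding g_def using fi by auto
  have "(\<integral>\<^sup>+y. ennreal (exp (g y)) \<partial>\<mu>) = (\<integral>\<^sup>+y. expneg \<alpha> (\<Phi> y) / ennreal Zr * ennreal (exp (g y)) \<partial>m)"
    unfolding \<mu>_def by (subst nn_integral_density) (auto simp: g_def)
  also have "\<dots> = (\<integral>\<^sup>+y. expneg \<alpha> (\<Phi> y - ereal (f y)) / ennreal Zr \<partial>m)"
    by (intro nn_integral_cong) (simp add: expneg_diff[OF \<Phi>ninf] g_def ennreal_times_divide mult.commute)
  also have "\<dots> = ennreal (Wr / Zr)"
    using Zpos Wpos by (simp add: nn_integral_divide W divide_ennreal)
  finally have Wg: "(\<integral>\<^sup>+y. ennreal (exp (g y)) \<partial>\<mu>) = ennreal (Wr / Zr)" .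
  have "ereal (integral\<^sup>L \<nu> g) \<le> Ent \<mu> \<nu> + ereal (ln (Wr / Zr))"
    by (rule gibbs[OF pmu pnu _ gm gi Wg]) (use Zpos Wpos nsets msets smu in auto)
  moreover have "integral\<^sup>L \<nu> g = \<alpha> * integral\<^sup>L \<nu> f" unfolding g_def by simp
  ultimately have key: "ereal (\<alpha> * integral\<^sup>L \<nu> f) \<le> Ent \<mu> \<nu> + ereal (ln (Wr / Zr))" by simp
  have "ereal (integral\<^sup>L \<nu> f) \<le> ereal (1/\<alpha>) * Ent \<mu> \<nu> + ereal ((1/\<alpha>) * ln (Wr/Zr))"
  proof (cases "Ent \<mu> \<nu>")
    case (real e)
    then have "\<alpha> * integral\<^sup>L \<nu> f \<le> e + ln (Wr / Zr)" using key by simp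
    then have "integral\<^sup>L \<nu> f \<le> (1/\<alpha>) * e + (1/\<alpha>) * ln (Wr/Zr)"
      using apos by (simp add: field_simps)
    then show ?thesis using real by simp
  next
    case PInf then show ?thesis using apos by simp
  next
    case MInf then show ?thesis using key by simp
  qed
  then show ?thesis unfolding Z \<mu>_def .
qed

lemma ennpow_ennreal: "0 \<le> r \<Longrightarrow> ennpow (ennreal r) p = ennreal (r powr p)"
  by (simp add: ennpow_def)
lemma ennpow_pos: assumes "0 < W" shows "0 < ennpow W p"
proof (cases "W = \<infinity>")
  case True then show ?thesis by (simp add: ennpow_def)
next
  case False
  then have "0 < enn2real W" using assms by (simp add: enn2real_positive_iff less_top)
  then show ?thesis using False by (simp add: ennpow_def)
qed
theorem theorem2p3:
  fixes c :: "('i::finite \<Rightarrow> 'a::euclidean_space) \<Rightarrow> real"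
    and \<alpha> :: "'i \<Rightarrow> real"
    and m :: "'i \<Rightarrow> 'a measure"
    and \<Phi> :: "'i \<Rightarrow> 'a \<Rightarrow> ereal"
    and \<nu> :: "'i \<Rightarrow> 'a measure"
  assumes c_meas: "c \<in> borel_measurable (PiM UNIV (\<lambda>_. borel))"
    and alpha_pos: "\<And>i. \<alpha> i > 0"
    and m_sets: "\<And>i. sets (m i) = sets borel"
    and Phi_meas: "\<And>i. \<Phi> i \<in> borel_measurable borel"
    and Phi_adm: "admissible c \<Phi>"
    and Phi_max: "\<And>V. admissible c V \<Longrightarrow> BS \<alpha> m V \<le> BS \<alpha> m \<Phi>"
    and Z_pos: "\<And>i. 0 < (\<integral>\<^sup>+ y. expneg (\<alpha> i) (\<Phi> i y) \<partial>(m i))"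
    and Z_fin: "\<And>i. (\<integral>\<^sup>+ y. expneg (\<alpha> i) (\<Phi> i y) \<partial>(m i)) < \<infinity>"
    and \<nu>_prob: "\<And>i. prob_space (\<nu> i)"
    and \<nu>_sets: "\<And>i. sets (\<nu> i) = sets borel"
    and primal_sol: "\<exists>\<pi>\<in>couplings \<nu>.
          (\<integral>\<^sup>+ x. e2ennreal ((\<Sum>i\<in>UNIV. \<Phi> i (x i)) - ereal (c x)) \<partial>\<pi>)
            = Kmin (\<lambda>x. (\<Sum>i\<in>UNIV. \<Phi> i (x i)) - ereal (c x)) \<nu>"
    and dual_sol: "\<exists>f. dual_feasible (\<lambda>x. (\<Sum>i\<in>UNIV. \<Phi> i (x i)) - ereal (c x)) \<nu> f \<and>
          (\<forall>g. dual_feasible (\<lambda>x. (\<Sum>i\<in>UNIV. \<Phi> i (x i)) - ereal (c x)) \<nu> g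
                 \<longrightarrow> dual_value \<nu> g \<le> dual_value \<nu> f) \<and>
          enn2ereal (Kmin (\<lambda>x. (\<Sum>i\<in>UNIV. \<Phi> i (x i)) - ereal (c x)) \<nu>)
            = ereal (dual_value \<nu> f)"
  shows "enn2ereal (Kmin (\<lambda>x. (\<Sum>i\<in>UNIV. \<Phi> i (x i)) - ereal (c x)) \<nu>)
    \<le> (\<Sum>i\<in>UNIV. ereal (1 / \<alpha> i) *
         Ent (density (m i) (\<lambda>y. expneg (\<alpha> i) (\<Phi> i y)
                                / (\<integral>\<^sup>+ z. expneg (\<alpha> i) (\<Phi> i z) \<partial>(m i)))) (\<nu> i))"
proof -
  let ?d = "\<lambda>x. (\<Sum>i\<in>UNIV. \<Phi> i (x i)) - ereal (c x)"
  from dual_sol obtain f where ffeas: "dual_feasible ?d \<nu> f"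
    and Keq: "enn2ereal (Kmin ?d \<nu>) = ereal (dual_value \<nu> f)" by blast
  have fi: "\<And>i. integrable (\<nu> i) (f i)" and fle: "\<And>x. ereal (\<Sum>i\<in>UNIV. f i (x i)) \<le> ?d x"
    using ffeas unfolding dual_feasible_def by auto
  have \<Phi>ninf: "\<And>i y. \<Phi> i y \<noteq> -\<infinity>" and \<Phi>c: "\<And>x. (\<Sum>i\<in>UNIV. \<Phi> i (x i)) \<ge> ereal (c x)"
    using Phi_adm unfolding admissible_def by auto
  define V where "V i y = \<Phi> i y - ereal (f i y)" for i y
  have Vadm: "admissible c V"
    unfolding admissible_def
  proof (intro conjI allI)
    fix i y show "V i y \<noteq> -\<infinity>" unfolding V_def using \<Phi>ninf[of i y] by (cases "\<Phi> i y") auto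
  next
    fix x
    have sd: "(\<Sum>i\<in>UNIV. V i (x i)) = (\<Sum>i\<in>UNIV. \<Phi> i (x i)) - ereal (\<Sum>i\<in>UNIV. f i (x i))"
      and nm: "(\<Sum>i\<in>UNIV. \<Phi> i (x i)) \<noteq> -\<infinity>"
      using ereal_sum_diff[of UNIV "\<lambda>i. \<Phi> i (x i)" "\<lambda>i. f i (x i)"] \<Phi>ninf unfolding V_def by auto
    show "ereal (c x) \<le> (\<Sum>i\<in>UNIV. V i (x i))"
      unfolding sd using fle[of x] nm
      by (cases "\<Sum>i\<in>UNIV. \<Phi> i (x i)") auto
  qed
  have BSle: "BS \<alpha> m V \<le> BS \<alpha> m \<Phi>" by (rule Phi_max[OF Vadm])
  define Z where "Z i = (\<integral>\<^sup>+ y. expneg (\<alpha> i) (\<Phi> i y) \<partial>(m i))" for i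
  define W where "W i = (\<integral>\<^sup>+ y. expneg (\<alpha> i) (V i y) \<partial>(m i))" for i
  define Zr where "Zr i = enn2real (Z i)" for i
  have Zeq: "\<And>i. Z i = ennreal (Zr i)" and Zrpos: "\<And>i. Zr i > 0"
    using Z_pos Z_fin unfolding Z_def Zr_def
    by (auto simp: ennreal_enn2real_if enn2real_positive_iff less_top)
  have \<Phi>m: "\<And>i. \<Phi> i \<in> borel_measurable (m i)"
    using Phi_meas unfolding measurable_cong_sets[OF m_sets refl] .
  have fm: "\<And>i. f i \<in> borel_measurable (m i)"
    using borel_measurable_integrable[OF fi] unfolding measurable_cong_sets[OF m_sets refl] measurable_cong_sets[OF \<nu>_sets refl] .
  have Vm: "\<And>i. (\<lambda>y. expneg (\<alpha> i) (V i y)) \<in> borel_measurable (m i)"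
    unfolding V_def using \<Phi>m fm by measurable
  have \<Phi>m2: "\<And>i. (\<lambda>y. expneg (\<alpha> i) (\<Phi> i y)) \<in> borel_measurable (m i)"
    using \<Phi>m by measurable
  have Wpos: "W i > 0" for i
  proof (rule ccontr)
    assume "\<not> W i > 0"
    then have "W i = 0" by (simp add: zero_less_iff_neq_zero)
    then have "AE y in m i. expneg (\<alpha> i) (V i y) = 0"
      unfolding W_def using nn_integral_0_iff_AE[OF Vm] by simp
    then have "AE y in m i. expneg (\<alpha> i) (\<Phi> i y) = 0"
      by eventually_elim (simp add: V_def expneg_diff[OF \<Phi>ninf])
    then have "Z i = 0" unfolding Z_def using nn_integral_0_iff_AE[OF \<Phi>m2] by simp
    then show False using Zrpos[of i] Zeq[of i] by simp
  qed
  have Zrnn: "\<And>i. 0 \<le> Zr i" using Zrpos by (simp add: less_imp_le)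
  have BS\<Phi>: "BS \<alpha> m \<Phi> = ennreal (\<Prod>i\<in>UNIV. Zr i powr (1 / \<alpha> i))"
    unfolding BS_def Z_def[symmetric] Zeq
    using Zrnn by (simp add: prod_ennreal ennpow_ennreal)
  have Wfin: "W i < \<infinity>" for i
  proof (rule ccontr)
    assume "\<not> W i < \<infinity>"
    then have Wi: "W i = \<infinity>" by (metis less_top infinity_ennreal_def)
    have "BS \<alpha> m V = \<infinity>"
      unfolding BS_def W_def[symmetric]
    proof (rule prod_top_ennreal[of UNIV i])
      show "ennpow (W i) (1 / \<alpha> i) = \<infinity>" using Wi by (simp add: ennpow_def)
    next
      fix j
      show "0 < ennpow (W j) (1 / \<alpha> j)"
        using Wpos[of j] by (rule ennpow_pos)
    qed auto
    then show False using BSle BS\<Phi> by (simp add: top_unique)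
  qed
  define Wr where "Wr i = enn2real (W i)" for i
  have Weq: "\<And>i. W i = ennreal (Wr i)" and Wrpos: "\<And>i. Wr i > 0"
    using Wpos Wfin unfolding Wr_def
    by (auto simp: ennreal_enn2real_if enn2real_positive_iff less_top)
  have Wrnn: "\<And>i. 0 \<le> Wr i" using Wrpos by (simp add: less_imp_le)
  have Wr0: "\<And>i. Wr i \<noteq> 0" using Wrpos by (metis less_irrefl)
  have Zr0: "\<And>i. Zr i \<noteq> 0" using Zrpos by (metis less_irrefl)
  have BSV: "BS \<alpha> m V = ennreal (\<Prod>i\<in>UNIV. Wr i powr (1 / \<alpha> i))"
    unfolding BS_def W_def[symmetric] Weq
    using Wrnn by (simp add: prod_ennreal ennpow_ennreal)
  have "(\<Prod>i\<in>UNIV. Wr i powr (1 / \<alpha> i)) \<le> (\<Prod>i\<in>UNIV. Zr i powr (1 / \<alpha> i))"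
    using BSle unfolding BSV BS\<Phi> by (simp add: prod_nonneg)
  then have "ln (\<Prod>i\<in>UNIV. Wr i powr (1 / \<alpha> i)) \<le> ln (\<Prod>i\<in>UNIV. Zr i powr (1 / \<alpha> i))"
    using Wrpos Zrpos Wr0 Zr0 by (subst ln_le_cancel_iff) (auto intro!: prod_pos)
  then have "(\<Sum>i\<in>UNIV. (1 / \<alpha> i) * ln (Wr i)) \<le> (\<Sum>i\<in>UNIV. (1 / \<alpha> i) * ln (Zr i))"
    using Wrpos Zrpos by (simp add: ln_prod less_imp_neq[symmetric])
  then have rle: "(\<Sum>i\<in>UNIV. (1 / \<alpha> i) * ln (Wr i / Zr i)) \<le> 0"
    using Wrpos Zrpos by (simp add: ln_div less_imp_neq[symmetric] right_diff_distrib sum_subtractf)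
  define E where "E i = ereal (1 / \<alpha> i) *
         Ent (density (m i) (\<lambda>y. expneg (\<alpha> i) (\<Phi> i y)
                                / (\<integral>\<^sup>+ z. expneg (\<alpha> i) (\<Phi> i z) \<partial>(m i)))) (\<nu> i)" for i
  have each: "ereal (integral\<^sup>L (\<nu> i) (f i)) \<le> E i + ereal ((1 / \<alpha> i) * ln (Wr i / Zr i))" for i
    unfolding E_def
  proof (rule per_i[OF alpha_pos m_sets Phi_meas \<Phi>ninf _ Zrpos \<nu>_prob \<nu>_sets fi _ Wrpos])
    show "(\<integral>\<^sup>+ y. expneg (\<alpha> i) (\<Phi> i y) \<partial>(m i)) = ennreal (Zr i)" using Zeq Z_def by simp
    show "(\<integral>\<^sup>+ y. expneg (\<alpha> i) (\<Phi> i y - ereal (f i y)) \<partial>(m i)) = ennreal (Wr i)"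
      using Weq W_def V_def by simp
  qed
  have "enn2ereal (Kmin ?d \<nu>) = (\<Sum>i\<in>UNIV. ereal (integral\<^sup>L (\<nu> i) (f i)))"
    using Keq by (simp add: dual_value_def)
  also have "\<dots> \<le> (\<Sum>i\<in>UNIV. E i + ereal ((1 / \<alpha> i) * ln (Wr i / Zr i)))"
    by (rule sum_mono) (rule each)
  also have "\<dots> = (\<Sum>i\<in>UNIV. E i) + ereal (\<Sum>i\<in>UNIV. (1 / \<alpha> i) * ln (Wr i / Zr i))"
    by (simp add: sum.distrib)
  also have "\<dots> \<le> (\<Sum>i\<in>UNIV. E i) + 0"
    using rle by (intro add_mono) (auto simp: zero_ereal_def)
  finally show ?thesis unfolding E_def by simp
qed

end
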